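(* Let $G$ be a finite group and let $\Gamma \le G$ be a subgroup. Then $\|\Gamma\|_W \le 1$, where $\Gamma$ is identified with its indicator function $\Gamma: G\to\{0,1\}$.
   Context: Let $\widehat{G}$ be a complete set of pairwise non-isomorphic irreducible unitary representations of $G$, and for $\rho\in\widehat G$ let $d_\rho$ be its dimension. For $f:G\to\mathbb{C}$ the Fourier transform at $\rho$ is the matrix $\widehat f(\rho)=\sum_{g\in G} f(g)\rho(g)$. For a matrix $M$, $\|M\| = \sqrt{\mathrm{tr}(MM^* )}$ is the Hilbert–Schmidt norm. The Wiener norm of $f$ is $\|f\|_W = \frac{1}{|G|}\sum_{\rho\in\widehat G} d_\rho \|\widehat f(\rho)\|$. *)

theory Defs
  imports "HOL-Algebra.Group" "Jordan_Normal_Form.Schur_Decomposition"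
begin

definition mtrace :: "complex mat \<Rightarrow> complex" where
  "mtrace M = (\<Sum>i<dim_row M. M $$ (i,i))"

definition hs_norm :: "complex mat \<Rightarrow> real" where
  "hs_norm M = sqrt (Re (mtrace (M * mat_adjoint M)))"

definition unitary_rep :: "('g, 'b) monoid_scheme \<Rightarrow> nat \<Rightarrow> ('g \<Rightarrow> complex mat) \<Rightarrow> bool" where
  "unitary_rep G d \<rho> \<longleftrightarrow> d > 0 \<and>
     (\<forall>g\<in>carrier G. \<rho> g \<in> carrier_mat d d \<and> \<rho> g * mat_adjoint (\<rho> g) = 1\<^sub>m d) \<and>
     (\<forall>g\<in>carrier G. \<forall>h\<in>carrier G. \<rho> (g \<otimes>\<^bsub>G\<^esub> h) = \<rho> g * \<rho> h)"

definition subspace_vec :: "nat \<Rightarrow> complex vec set \<Rightarrow> bool" where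
  "subspace_vec d W \<longleftrightarrow> W \<subseteq> carrier_vec d \<and> 0\<^sub>v d \<in> W \<and>
     (\<forall>v\<in>W. \<forall>w\<in>W. v + w \<in> W) \<and> (\<forall>c. \<forall>v\<in>W. c \<cdot>\<^sub>v v \<in> W)"

definition irreducible_rep :: "('g, 'b) monoid_scheme \<Rightarrow> nat \<Rightarrow> ('g \<Rightarrow> complex mat) \<Rightarrow> bool" where
  "irreducible_rep G d \<rho> \<longleftrightarrow>
     (\<forall>W. subspace_vec d W \<and> (\<forall>g\<in>carrier G. \<forall>v\<in>W. \<rho> g *\<^sub>v v \<in> W)
          \<longrightarrow> W = {0\<^sub>v d} \<or> W = carrier_vec d)"

definition iso_rep :: "('g, 'b) monoid_scheme \<Rightarrow> nat \<Rightarrow> ('g \<Rightarrow> complex mat) \<Rightarrow> nat \<Rightarrow> ('g \<Rightarrow> complex mat) \<Rightarrow> bool" where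
  "iso_rep G d \<rho> e \<sigma> \<longleftrightarrow> d = e \<and>
     (\<exists>T \<in> carrier_mat d d. invertible_mat T \<and> (\<forall>g\<in>carrier G. T * \<rho> g = \<sigma> g * T))"

definition complete_irreps :: "('g, 'b) monoid_scheme \<Rightarrow> (nat \<times> ('g \<Rightarrow> complex mat)) set \<Rightarrow> bool" where
  "complete_irreps G R \<longleftrightarrow>
     (\<forall>(d,\<rho>)\<in>R. unitary_rep G d \<rho> \<and> irreducible_rep G d \<rho>) \<and>
     (\<forall>(d,\<rho>)\<in>R. \<forall>(e,\<sigma>)\<in>R. iso_rep G d \<rho> e \<sigma> \<longrightarrow> (d,\<rho>) = (e,\<sigma>)) \<and>
     (\<forall>d \<rho>. unitary_rep G d \<rho> \<and> irreducible_rep G d \<rho> \<longrightarrow> (\<exists>(e,\<sigma>)\<in>R. iso_rep G d \<rho> e \<sigma>))"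

definition fourier :: "('g, 'b) monoid_scheme \<Rightarrow> ('g \<Rightarrow> complex) \<Rightarrow> nat \<Rightarrow> ('g \<Rightarrow> complex mat) \<Rightarrow> complex mat" where
  "fourier G f d \<rho> = mat d d (\<lambda>(i,j). \<Sum>g\<in>carrier G. f g * \<rho> g $$ (i,j))"

definition wiener_norm :: "('g, 'b) monoid_scheme \<Rightarrow> (nat \<times> ('g \<Rightarrow> complex mat)) set \<Rightarrow> ('g \<Rightarrow> complex) \<Rightarrow> real" where
  "wiener_norm G R f = (1 / real (card (carrier G))) *
     (\<Sum>(d,\<rho>)\<in>R. real d * hs_norm (fourier G f d \<rho>))"

end

theory Submission
  imports Defs
begin

lemma mult_entry:
  assumes "A \<in> carrier_mat n m" "B \<in> carrier_mat m p" "i < n" "j < p"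
  shows "(A * B) $$ (i,j) = (\<Sum>k<m. A $$ (i,k) * B $$ (k,j))"
  using assms by (simp add: scalar_prod_def lessThan_atLeast0)
lemma adj_dims[simp]: "dim_row (mat_adjoint A) = dim_col A" "dim_col (mat_adjoint A) = dim_row A"
  by (auto simp: mat_adjoint_def)
lemma adj_entry:
  assumes "i < dim_col A" "j < dim_row A"
  shows "mat_adjoint A $$ (i,j) = cnj (A $$ (j,i))"
  using assms by (simp add: mat_adjoint_def mat_of_rows_def)
lemma adj_carrier: "A \<in> carrier_mat n m \<Longrightarrow> mat_adjoint A \<in> carrier_mat m n"
  unfolding carrier_mat_def by simp
lemma adj_adj: "mat_adjoint (mat_adjoint (A::complex mat)) = A"
proof (rule eq_matI)
  fix i j assume "i < dim_row A" "j < dim_col A"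
  thus "mat_adjoint (mat_adjoint A) $$ (i, j) = A $$ (i, j)" by (simp add: adj_entry)
qed simp_all
lemma adj_mult:
  assumes A: "A \<in> carrier_mat n m" and B: "B \<in> carrier_mat m p"
  shows "mat_adjoint (A * (B::complex mat)) = mat_adjoint B * mat_adjoint A"
proof (rule eq_matI)
  have A': "mat_adjoint A \<in> carrier_mat m n" and B': "mat_adjoint B \<in> carrier_mat p m"
    using A B by (auto intro: adj_carrier)
  fix i j assume ij: "i < dim_row (mat_adjoint B * mat_adjoint A)" "j < dim_col (mat_adjoint B * mat_adjoint A)"
  hence i: "i < p" and j: "j < n" using A' B' by auto
  have "mat_adjoint (A * B) $$ (i, j) = cnj ((A*B) $$ (j,i))" using A B i j by (simp add: adj_entry)
  also have "\<dots> = (\<Sum>k<m. cnj (A $$ (j,k)) * cnj (B $$ (k,i)))"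
    unfolding mult_entry[OF A B j i] cnj_sum by simp
  also have "\<dots> = (\<Sum>k<m. mat_adjoint B $$ (i,k) * mat_adjoint A $$ (k,j))"
    by (rule sum.cong) (use A B i j in \<open>auto simp: adj_entry\<close>)
  also have "\<dots> = (mat_adjoint B * mat_adjoint A) $$ (i,j)"
    unfolding mult_entry[OF B' A' i j] ..
  finally show "mat_adjoint (A * B) $$ (i, j) = (mat_adjoint B * mat_adjoint A) $$ (i, j)" .
qed (use A B in auto)

lemma rep_carrier: "unitary_rep G d \<rho> \<Longrightarrow> g \<in> carrier G \<Longrightarrow> \<rho> g \<in> carrier_mat d d"
  unfolding unitary_rep_def by auto

lemma rep_unit: "unitary_rep G d \<rho> \<Longrightarrow> g \<in> carrier G \<Longrightarrow> \<rho> g * mat_adjoint (\<rho> g) = 1\<^sub>m d"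
  unfolding unitary_rep_def by auto

lemma rep_hom: "unitary_rep G d \<rho> \<Longrightarrow> g \<in> carrier G \<Longrightarrow> h \<in> carrier G \<Longrightarrow> \<rho> (g \<otimes>\<^bsub>G\<^esub> h) = \<rho> g * \<rho> h"
  unfolding unitary_rep_def by auto

lemma rep_one:
  fixes G (structure)
  assumes G: "group G" and r: "unitary_rep G d \<rho>"
  shows "\<rho> \<one>\<^bsub>G\<^esub> = 1\<^sub>m d"
proof -
  interpret group G by fact
  have c: "\<rho> \<one> \<in> carrier_mat d d" using rep_carrier[OF r] by simp
  have ca: "mat_adjoint (\<rho> \<one>) \<in> carrier_mat d d" using adj_carrier[OF c] .
  have idem: "\<rho> \<one> = \<rho> \<one> * \<rho> \<one>" using rep_hom[OF r, of \<one> \<one>] by simp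
  have "1\<^sub>m d = \<rho> \<one> * mat_adjoint (\<rho> \<one>)" using rep_unit[OF r] by simp
  also have "\<dots> = (\<rho> \<one> * \<rho> \<one>) * mat_adjoint (\<rho> \<one>)" using idem by simp
  also have "\<dots> = \<rho> \<one> * (\<rho> \<one> * mat_adjoint (\<rho> \<one>))" using c ca by simp
  also have "\<dots> = \<rho> \<one>" using rep_unit[OF r] c by simp
  finally show ?thesis by simp
qed

lemma rep_inv:
  fixes G (structure)
  assumes G: "group G" and r: "unitary_rep G d \<rho>" and g: "g \<in> carrier G"
  shows "\<rho> (inv\<^bsub>G\<^esub> g) = mat_adjoint (\<rho> g)"
proof -
  interpret group G by fact
  have c: "\<rho> g \<in> carrier_mat d d" using rep_carrier[OF r g] .
  have ci: "\<rho> (inv g) \<in> carrier_mat d d" using rep_carrier[OF r] g by simp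
  have ca: "mat_adjoint (\<rho> g) \<in> carrier_mat d d" using adj_carrier[OF c] .
  have li: "\<rho> (inv g) * \<rho> g = 1\<^sub>m d"
    using rep_hom[OF r, of "inv g" g] g rep_one[OF G r] by simp
  have "\<rho> (inv g) = \<rho> (inv g) * (\<rho> g * mat_adjoint (\<rho> g))" using rep_unit[OF r g] ci by simp
  also have "\<dots> = (\<rho> (inv g) * \<rho> g) * mat_adjoint (\<rho> g)" using c ci ca by simp
  also have "\<dots> = mat_adjoint (\<rho> g)" using li left_mult_one_mat[OF ca] by simp
  finally show ?thesis .
qed

lemma rep_inv_entry:
  assumes G: "group G" and r: "unitary_rep G d \<rho>" and g: "g \<in> carrier G" and "i < d" "j < d"
  shows "\<rho> (inv\<^bsub>G\<^esub> g) $$ (i,j) = cnj (\<rho> g $$ (j,i))"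
  using rep_inv[OF G r g] rep_carrier[OF r g] assms(4,5) by (simp add: adj_entry)

lemma schur_scalar:
  assumes irr: "irreducible_rep G d \<rho>" and d: "d > 0" and S: "S \<in> carrier_mat d d"
    and rc: "\<And>g. g \<in> carrier G \<Longrightarrow> \<rho> g \<in> carrier_mat d d"
    and comm: "\<And>g. g \<in> carrier G \<Longrightarrow> \<rho> g * S = S * \<rho> g"
  shows "\<exists>c. S = c \<cdot>\<^sub>m 1\<^sub>m d"
proof -
  have "degree (char_poly S) = d" using degree_monic_char_poly[OF S] by simp
  hence "\<not> constant (poly (char_poly S))" using d constant_degree[of "char_poly S"] by simp
  then obtain c where "poly (char_poly S) c = 0" using fundamental_theorem_of_algebra by blast
  hence "eigenvalue S c" using eigenvalue_root_char_poly[OF S] by simp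
  then obtain v where ev: "eigenvector S v c" unfolding eigenvalue_def by auto
  hence v: "v \<in> carrier_vec d" "v \<noteq> 0\<^sub>v d" "S *\<^sub>v v = c \<cdot>\<^sub>v v"
    using S unfolding eigenvector_def by auto
  define W where "W = {w \<in> carrier_vec d. S *\<^sub>v w = c \<cdot>\<^sub>v w}"
  have sub: "subspace_vec d W"
    unfolding subspace_vec_def W_def
  proof (intro conjI ballI allI)
    show "0\<^sub>v d \<in> {w \<in> carrier_vec d. S *\<^sub>v w = c \<cdot>\<^sub>v w}"
      using S by (auto intro!: eq_vecI)
  next
    fix x y assume x: "x \<in> {w \<in> carrier_vec d. S *\<^sub>v w = c \<cdot>\<^sub>v w}" and y: "y \<in> {w \<in> carrier_vec d. S *\<^sub>v w = c \<cdot>\<^sub>v w}"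
    thus "x + y \<in> {w \<in> carrier_vec d. S *\<^sub>v w = c \<cdot>\<^sub>v w}"
      using S by (auto simp: mult_add_distrib_mat_vec[OF S] smult_add_distrib_vec)
  next
    fix k x assume x: "x \<in> {w \<in> carrier_vec d. S *\<^sub>v w = c \<cdot>\<^sub>v w}"
    thus "k \<cdot>\<^sub>v x \<in> {w \<in> carrier_vec d. S *\<^sub>v w = c \<cdot>\<^sub>v w}"
      using S by (auto simp: mult_mat_vec[OF S] smult_smult_assoc mult.commute)
  qed auto
  have inv: "\<forall>g\<in>carrier G. \<forall>w\<in>W. \<rho> g *\<^sub>v w \<in> W"
  proof (intro ballI)
    fix g w assume g: "g \<in> carrier G" and w: "w \<in> W"
    have wc: "w \<in> carrier_vec d" "S *\<^sub>v w = c \<cdot>\<^sub>v w" using w unfolding W_def by auto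
    have "S *\<^sub>v (\<rho> g *\<^sub>v w) = (S * \<rho> g) *\<^sub>v w" using S rc[OF g] wc by simp
    also have "\<dots> = (\<rho> g * S) *\<^sub>v w" using comm[OF g] by simp
    also have "\<dots> = \<rho> g *\<^sub>v (c \<cdot>\<^sub>v w)" using S rc[OF g] wc by simp
    also have "\<dots> = c \<cdot>\<^sub>v (\<rho> g *\<^sub>v w)" using mult_mat_vec[OF rc[OF g] wc(1)] .
    finally show "\<rho> g *\<^sub>v w \<in> W" unfolding W_def using mult_mat_vec_carrier[OF rc[OF g] wc(1)] by auto
  qed
  have "W = {0\<^sub>v d} \<or> W = carrier_vec d" using irr sub inv unfolding irreducible_rep_def by blast
  moreover have "v \<in> W" using v unfolding W_def by auto
  ultimately have Wall: "W = carrier_vec d" using v by auto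
  have "S = c \<cdot>\<^sub>m 1\<^sub>m d"
  proof (rule eq_matI)
    fix i j assume i: "i < dim_row (c \<cdot>\<^sub>m 1\<^sub>m d)" and j: "j < dim_col (c \<cdot>\<^sub>m 1\<^sub>m d)"
    have "unit_vec d j \<in> W" using Wall by simp
    hence "S *\<^sub>v unit_vec d j = c \<cdot>\<^sub>v unit_vec d j" unfolding W_def by auto
    hence "(S *\<^sub>v unit_vec d j) $ i = (c \<cdot>\<^sub>v unit_vec d j) $ i" by simp
    thus "S $$ (i, j) = (c \<cdot>\<^sub>m 1\<^sub>m d) $$ (i, j)" using i j S by simp
  qed (use S in auto)
  thus ?thesis by blast
qed


lemma sum_left_translate:
  fixes G (structure)
  assumes G: "group G" and h: "h \<in> carrier G"
  shows "(\<Sum>g\<in>carrier G. F (h \<otimes> g)) = (\<Sum>g\<in>carrier G. F g)"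
proof -
  interpret group G by fact
  show ?thesis
    by (rule sum.reindex_bij_witness[where i="\<lambda>g. inv h \<otimes> g" and j="\<lambda>g. h \<otimes> g"])
       (use h in \<open>auto simp: m_assoc[symmetric]\<close>)
qed

definition Tm :: "('g, 'b) monoid_scheme \<Rightarrow> ('g \<Rightarrow> complex mat) \<Rightarrow> ('g \<Rightarrow> complex mat) \<Rightarrow> nat \<Rightarrow> nat \<Rightarrow> nat \<Rightarrow> nat \<Rightarrow> complex mat" where
  "Tm G \<rho> \<sigma> d e j l = mat d e (\<lambda>(i,k). \<Sum>g\<in>carrier G. \<rho> g $$ (i,j) * cnj (\<sigma> g $$ (k,l)))"

lemma Tm_carrier: "Tm G \<rho> \<sigma> d e j l \<in> carrier_mat d e"
  unfolding Tm_def by simp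

lemma Tm_entry: "i < d \<Longrightarrow> k < e \<Longrightarrow> Tm G \<rho> \<sigma> d e j l $$ (i,k) = (\<Sum>g\<in>carrier G. \<rho> g $$ (i,j) * cnj (\<sigma> g $$ (k,l)))"
  unfolding Tm_def by simp

lemma Tm_intertwine:
  fixes G (structure)
  assumes G: "group G" and r: "unitary_rep G d \<rho>" and s: "unitary_rep G e \<sigma>"
    and h: "h \<in> carrier G" and j: "j < d" and l: "l < e"
  shows "\<rho> h * Tm G \<rho> \<sigma> d e j l = Tm G \<rho> \<sigma> d e j l * \<sigma> h"
proof -
  interpret group G by fact
  have rh: "\<rho> h \<in> carrier_mat d d" and sh: "\<sigma> h \<in> carrier_mat e e"
    using rep_carrier[OF r h] rep_carrier[OF s h] .
  note T = Tm_carrier[of G \<rho> \<sigma> d e j l]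
  show ?thesis
  proof (rule eq_matI)
    fix i k assume "i < dim_row (Tm G \<rho> \<sigma> d e j l * \<sigma> h)" "k < dim_col (Tm G \<rho> \<sigma> d e j l * \<sigma> h)"
    hence i: "i < d" and k: "k < e" using T sh by auto
    have "(\<rho> h * Tm G \<rho> \<sigma> d e j l) $$ (i,k) = (\<Sum>m<d. \<rho> h $$ (i,m) * (\<Sum>g\<in>carrier G. \<rho> g $$ (m,j) * cnj (\<sigma> g $$ (k,l))))"
      unfolding mult_entry[OF rh T i k] by (intro sum.cong refl) (simp add: Tm_entry k)
    also have "\<dots> = (\<Sum>g\<in>carrier G. (\<Sum>m<d. \<rho> h $$ (i,m) * \<rho> g $$ (m,j)) * cnj (\<sigma> g $$ (k,l)))"
      by (simp add: sum_distrib_left sum_distrib_right sum.swap[of _ "{..<d}"] mult_ac)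
    also have "\<dots> = (\<Sum>g\<in>carrier G. \<rho> (h \<otimes> g) $$ (i,j) * cnj (\<sigma> g $$ (k,l)))"
    proof (intro sum.cong refl)
      fix g assume g: "g \<in> carrier G"
      show "(\<Sum>m<d. \<rho> h $$ (i,m) * \<rho> g $$ (m,j)) * cnj (\<sigma> g $$ (k,l)) = \<rho> (h \<otimes> g) $$ (i,j) * cnj (\<sigma> g $$ (k,l))"
        using rep_hom[OF r h g] mult_entry[OF rh rep_carrier[OF r g] i j] by simp
    qed
    finally have L: "(\<rho> h * Tm G \<rho> \<sigma> d e j l) $$ (i,k) = (\<Sum>g\<in>carrier G. \<rho> (h \<otimes> g) $$ (i,j) * cnj (\<sigma> g $$ (k,l)))" .
    have "(Tm G \<rho> \<sigma> d e j l * \<sigma> h) $$ (i,k) = (\<Sum>m<e. (\<Sum>g\<in>carrier G. \<rho> g $$ (i,j) * cnj (\<sigma> g $$ (m,l))) * \<sigma> h $$ (m,k))"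
      unfolding mult_entry[OF T sh i k] by (intro sum.cong refl) (simp add: Tm_entry i)
    also have "\<dots> = (\<Sum>g\<in>carrier G. \<rho> g $$ (i,j) * (\<Sum>m<e. cnj (\<sigma> g $$ (m,l)) * \<sigma> h $$ (m,k)))"
      by (simp add: sum_distrib_left sum_distrib_right sum.swap[of _ "{..<e}"] mult_ac)
    also have "\<dots> = (\<Sum>g\<in>carrier G. \<rho> g $$ (i,j) * cnj (\<sigma> (inv h \<otimes> g) $$ (k,l)))"
    proof (intro sum.cong refl)
      fix g assume g: "g \<in> carrier G"
      have ig: "inv g \<in> carrier G" and ihg: "inv h \<otimes> g \<in> carrier G" using g h by auto
      have "(\<Sum>m<e. cnj (\<sigma> g $$ (m,l)) * \<sigma> h $$ (m,k)) = (\<Sum>m<e. \<sigma> (inv g) $$ (l,m) * \<sigma> h $$ (m,k))"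
        by (intro sum.cong refl) (simp add: rep_inv_entry[OF G s g l])
      also have "\<dots> = (\<sigma> (inv g) * \<sigma> h) $$ (l,k)"
        using mult_entry[OF rep_carrier[OF s ig] sh l k] by simp
      also have "\<dots> = \<sigma> (inv g \<otimes> h) $$ (l,k)" using rep_hom[OF s ig h] by simp
      also have "inv g \<otimes> h = inv (inv h \<otimes> g)" using g h by (simp add: inv_mult_group)
      also have "\<sigma> (inv (inv h \<otimes> g)) $$ (l,k) = cnj (\<sigma> (inv h \<otimes> g) $$ (k,l))"
        by (rule rep_inv_entry[OF G s ihg l k])
      finally show "\<rho> g $$ (i,j) * (\<Sum>m<e. cnj (\<sigma> g $$ (m,l)) * \<sigma> h $$ (m,k)) = \<rho> g $$ (i,j) * cnj (\<sigma> (inv h \<otimes> g) $$ (k,l))"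
        by simp
    qed
    also have "\<dots> = (\<Sum>g\<in>carrier G. \<rho> (h \<otimes> g) $$ (i,j) * cnj (\<sigma> (inv h \<otimes> (h \<otimes> g)) $$ (k,l)))"
      by (rule sum_left_translate[OF G h, symmetric])
    also have "\<dots> = (\<Sum>g\<in>carrier G. \<rho> (h \<otimes> g) $$ (i,j) * cnj (\<sigma> g $$ (k,l)))"
      by (intro sum.cong refl) (use h in \<open>simp add: m_assoc[symmetric]\<close>)
    finally show "(\<rho> h * Tm G \<rho> \<sigma> d e j l) $$ (i,k) = (Tm G \<rho> \<sigma> d e j l * \<sigma> h) $$ (i,k)"
      using L by simp
  qed (use T rh sh in auto)
qed


lemma cmod_sum_pos:
  fixes T :: "nat \<Rightarrow> complex"
  assumes "k < e" "T k \<noteq> 0"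
  shows "(\<Sum>m<e. T m * cnj (T m)) \<noteq> 0"
proof -
  have "(\<Sum>m<e. T m * cnj (T m)) = complex_of_real (\<Sum>m<e. (cmod (T m))\<^sup>2)"
    unfolding of_real_sum complex_norm_square ..
  moreover have "(\<Sum>m<e. (cmod (T m))\<^sup>2) > 0"
    using assms by (intro sum_pos2[of _ k]) auto
  ultimately show ?thesis by (metis of_real_eq_0_iff order_less_irrefl)
qed

lemma smult_inv_cancel: "(c::complex) \<noteq> 0 \<Longrightarrow> (1/c) \<cdot>\<^sub>m (c \<cdot>\<^sub>m 1\<^sub>m n) = 1\<^sub>m n"
  by (rule eq_matI) auto

lemma schur_zero:
  fixes G (structure)
  assumes G: "group G" and R: "complete_irreps G R" and dr: "(d,\<rho>) \<in> R" and es: "(e,\<sigma>) \<in> R"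
    and ne: "(d,\<rho>) \<noteq> (e,\<sigma>)" and T: "T \<in> carrier_mat d e"
    and tw: "\<And>h. h \<in> carrier G \<Longrightarrow> \<rho> h * T = T * \<sigma> h"
  shows "T = 0\<^sub>m d e"
proof (rule ccontr)
  assume T0: "T \<noteq> 0\<^sub>m d e"
  interpret group G by fact
  have r: "unitary_rep G d \<rho>" and ir: "irreducible_rep G d \<rho>"
    and s: "unitary_rep G e \<sigma>" and irs: "irreducible_rep G e \<sigma>"
    using R dr es unfolding complete_irreps_def by fast+
  have d: "d > 0" and e: "e > 0" using r s unfolding unitary_rep_def by auto
  define T' where "T' = mat_adjoint T"
  have T': "T' \<in> carrier_mat e d" unfolding T'_def using adj_carrier[OF T] .
  have tw': "\<sigma> h * T' = T' * \<rho> h" if h: "h \<in> carrier G" for h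
  proof -
    have ih: "inv h \<in> carrier G" using h by simp
    have "mat_adjoint (\<rho> (inv h) * T) = mat_adjoint (T * \<sigma> (inv h))" using tw[OF ih] by simp
    moreover have "mat_adjoint (\<rho> (inv h) * T) = T' * \<rho> h"
      using adj_mult[OF rep_carrier[OF r ih] T] rep_inv[OF G r h] adj_adj unfolding T'_def by metis
    moreover have "mat_adjoint (T * \<sigma> (inv h)) = \<sigma> h * T'"
      using adj_mult[OF T rep_carrier[OF s ih]] rep_inv[OF G s h] adj_adj unfolding T'_def by metis
    ultimately show ?thesis by simp
  qed
  have M1c: "T * T' \<in> carrier_mat d d" using T T' by simp
  have M2c: "T' * T \<in> carrier_mat e e" using T T' by simp
  have "\<exists>c. T * T' = c \<cdot>\<^sub>m 1\<^sub>m d"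
  proof (rule schur_scalar[OF ir d M1c])
    fix h assume h: "h \<in> carrier G"
    show "\<rho> h \<in> carrier_mat d d" using rep_carrier[OF r h] .
    have rh: "\<rho> h \<in> carrier_mat d d" and sh: "\<sigma> h \<in> carrier_mat e e" using rep_carrier[OF r h] rep_carrier[OF s h] .
    have "\<rho> h * (T * T') = (\<rho> h * T) * T'" using rh T T' by simp
    also have "\<dots> = T * (\<sigma> h * T')" using tw[OF h] T sh T' by simp
    also have "\<dots> = (T * T') * \<rho> h" using tw'[OF h] T T' rh by simp
    finally show "\<rho> h * (T * T') = T * T' * \<rho> h" .
  qed
  then obtain c1 where c1: "T * T' = c1 \<cdot>\<^sub>m 1\<^sub>m d" by blast
  have "\<exists>c. T' * T = c \<cdot>\<^sub>m 1\<^sub>m e"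
  proof (rule schur_scalar[OF irs e M2c])
    fix h assume h: "h \<in> carrier G"
    show "\<sigma> h \<in> carrier_mat e e" using rep_carrier[OF s h] .
    have rh: "\<rho> h \<in> carrier_mat d d" and sh: "\<sigma> h \<in> carrier_mat e e" using rep_carrier[OF r h] rep_carrier[OF s h] .
    have "\<sigma> h * (T' * T) = (\<sigma> h * T') * T" using sh T T' by simp
    also have "\<dots> = T' * (\<rho> h * T)" using tw'[OF h] T rh T' by simp
    also have "\<dots> = (T' * T) * \<sigma> h" using tw[OF h] T T' sh by simp
    finally show "\<sigma> h * (T' * T) = T' * T * \<sigma> h" .
  qed
  then obtain c2 where c2: "T' * T = c2 \<cdot>\<^sub>m 1\<^sub>m e" by blast
  obtain i k where i: "i < d" and k: "k < e" and Tik: "T $$ (i,k) \<noteq> 0"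
  proof -
    have "\<exists>i k. i < d \<and> k < e \<and> T $$ (i,k) \<noteq> 0"
    proof (rule ccontr)
      assume "\<not> ?thesis"
      hence "T = 0\<^sub>m d e" using T by (intro eq_matI) auto
      thus False using T0 by simp
    qed
    thus ?thesis using that by blast
  qed
  have M1ii: "(T * T') $$ (a,a) = (\<Sum>m<e. T $$ (a,m) * cnj (T $$ (a,m)))" if a: "a < d" for a
    unfolding mult_entry[OF T T' a a] using T a by (intro sum.cong refl) (simp add: T'_def adj_entry)
  have M2kk: "(T' * T) $$ (b,b) = (\<Sum>m<d. T $$ (m,b) * cnj (T $$ (m,b)))" if b: "b < e" for b
    unfolding mult_entry[OF T' T b b] using T b by (intro sum.cong refl) (simp add: T'_def adj_entry)
  have c1ne: "c1 \<noteq> 0"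
  proof -
    have "(T * T') $$ (i,i) = c1" using c1 i by simp
    moreover have "(T * T') $$ (i,i) \<noteq> 0" unfolding M1ii[OF i] by (rule cmod_sum_pos[where T="\<lambda>m. T $$ (i,m)", OF k Tik])
    ultimately show ?thesis by simp
  qed
  have "(T * T') * T = T * (T' * T)" using T T' by simp
  moreover have "(c1 \<cdot>\<^sub>m 1\<^sub>m d) * T = c1 \<cdot>\<^sub>m T"
    using mult_smult_assoc_mat[OF one_carrier_mat[of d] T] left_mult_one_mat[OF T] by simp
  moreover have "T * (c2 \<cdot>\<^sub>m 1\<^sub>m e) = c2 \<cdot>\<^sub>m T"
    using mult_smult_distrib[OF T one_carrier_mat[of e]] right_mult_one_mat[OF T] by simp
  ultimately have "c1 \<cdot>\<^sub>m T = c2 \<cdot>\<^sub>m T" unfolding c1 c2 by simp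
  hence "(c1 \<cdot>\<^sub>m T) $$ (i,k) = (c2 \<cdot>\<^sub>m T) $$ (i,k)" by simp
  hence "c1 * T $$ (i,k) = c2 * T $$ (i,k)" using T i k by simp
  hence c12: "c1 = c2" using Tik by simp
  have "of_nat d * c1 = (\<Sum>a<d. (T * T') $$ (a,a))" using c1 by simp
  also have "\<dots> = (\<Sum>a<d. \<Sum>m<e. T $$ (a,m) * cnj (T $$ (a,m)))" using M1ii by simp
  also have "\<dots> = (\<Sum>m<e. \<Sum>a<d. T $$ (a,m) * cnj (T $$ (a,m)))" by (rule sum.swap)
  also have "\<dots> = (\<Sum>b<e. (T' * T) $$ (b,b))" using M2kk by simp
  also have "\<dots> = of_nat e * c1" using c2 c12 by simp
  finally have "d = e" using c1ne by simp
  have inv: "invertible_mat T"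
    unfolding invertible_mat_def inverts_mat_def
  proof (intro conjI exI)
    show "square_mat T" using T \<open>d = e\<close> by simp
    show "T * ((1 / c1) \<cdot>\<^sub>m T') = 1\<^sub>m (dim_row T)"
      using T mult_smult_distrib[OF T T', of "1/c1"] c1 smult_inv_cancel[OF c1ne] by simp
    show "(1 / c1) \<cdot>\<^sub>m T' * T = 1\<^sub>m (dim_row ((1 / c1) \<cdot>\<^sub>m T'))"
      using T' mult_smult_assoc_mat[OF T' T, of "1/c1"] c2 c12 smult_inv_cancel[OF c1ne] by simp
  qed
  have "iso_rep G e \<sigma> d \<rho>"
    unfolding iso_rep_def using \<open>d = e\<close> T inv tw by auto
  hence "(e,\<sigma>) = (d,\<rho>)" using R dr es unfolding complete_irreps_def by fast
  thus False using ne by simp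
qed


lemma orth:
  fixes G (structure)
  assumes G: "group G" and R: "complete_irreps G R" and dr: "(d,\<rho>) \<in> R" and es: "(e,\<sigma>) \<in> R"
    and i: "i < d" and j: "j < d" and k: "k < e" and l: "l < e"
  shows "(\<Sum>g\<in>carrier G. \<rho> g $$ (i,j) * cnj (\<sigma> g $$ (k,l))) =
    (if (d,\<rho>) = (e,\<sigma>) \<and> i = k \<and> j = l then of_nat (card (carrier G)) / of_nat d else 0)"
proof -
  interpret group G by fact
  have r: "unitary_rep G d \<rho>" and ir: "irreducible_rep G d \<rho>"
    and s: "unitary_rep G e \<sigma>"
    using R dr es unfolding complete_irreps_def by fast+
  have d: "d > 0" using r unfolding unitary_rep_def by auto
  have L: "(\<Sum>g\<in>carrier G. \<rho> g $$ (i,j) * cnj (\<sigma> g $$ (k,l))) = Tm G \<rho> \<sigma> d e j l $$ (i,k)"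
    by (rule Tm_entry[OF i k, symmetric])
  show ?thesis
  proof (cases "(d,\<rho>) = (e,\<sigma>)")
    case False
    have "Tm G \<rho> \<sigma> d e j l = 0\<^sub>m d e"
      by (rule schur_zero[OF G R dr es False Tm_carrier]) (rule Tm_intertwine[OF G r s _ j l])
    thus ?thesis using L False i k by auto
  next
    case True
    hence ed: "e = d" "\<sigma> = \<rho>" by auto
    have "\<exists>c. Tm G \<rho> \<rho> d d j l = c \<cdot>\<^sub>m 1\<^sub>m d"
      by (rule schur_scalar[OF ir d Tm_carrier], rule rep_carrier[OF r],
          simp, rule Tm_intertwine[OF G r r _ j], use l ed in auto)
    then obtain c where c: "Tm G \<rho> \<rho> d d j l = c \<cdot>\<^sub>m 1\<^sub>m d" by blast
    have "of_nat d * c = (\<Sum>a<d. Tm G \<rho> \<rho> d d j l $$ (a,a))" using c by simp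
    also have "\<dots> = (\<Sum>a<d. \<Sum>g\<in>carrier G. \<rho> g $$ (a,j) * cnj (\<rho> g $$ (a,l)))"
      by (intro sum.cong refl) (simp add: Tm_entry)
    also have "\<dots> = (\<Sum>g\<in>carrier G. \<Sum>a<d. \<rho> (inv g) $$ (l,a) * \<rho> g $$ (a,j))"
      by (subst sum.swap) (intro sum.cong refl, use l ed in \<open>simp add: rep_inv_entry[OF G r] mult.commute\<close>)
    also have "\<dots> = (\<Sum>g\<in>carrier G. (\<rho> (inv g) * \<rho> g) $$ (l,j))"
      by (intro sum.cong refl) (use l ed j in \<open>simp add: mult_entry[OF rep_carrier[OF r] rep_carrier[OF r]]\<close>)
    also have "\<dots> = (\<Sum>g\<in>carrier G. (if l = j then 1 else 0))"
      by (intro sum.cong refl) (use l ed j in \<open>simp add: rep_hom[OF r, symmetric] rep_one[OF G r]\<close>)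
    finally have tr: "of_nat d * c = of_nat (card (carrier G)) * (if l = j then 1 else 0)" by simp
    have cval: "c = (if l = j then of_nat (card (carrier G)) / of_nat d else 0)"
      using tr d by (auto simp: field_simps)
    have "Tm G \<rho> \<rho> d d j l $$ (i,k) = c * (if i = k then 1 else 0)" using c i k ed by simp
    thus ?thesis using L ed cval True by auto
  qed
qed


lemma bessel:
  fixes f :: "'x \<Rightarrow> complex" and \<phi> :: "'i \<Rightarrow> 'x \<Rightarrow> complex" and c :: "'i \<Rightarrow> real"
  assumes X: "finite X" and I: "finite I"
    and orth: "\<And>a b. a \<in> I \<Longrightarrow> b \<in> I \<Longrightarrow>
      (\<Sum>x\<in>X. \<phi> a x * cnj (\<phi> b x)) = (if a = b then complex_of_real (c a) else 0)"
    and pos: "\<And>a. a \<in> I \<Longrightarrow> c a > 0"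
  shows "(\<Sum>a\<in>I. (cmod (\<Sum>x\<in>X. f x * cnj (\<phi> a x)))\<^sup>2 / c a) \<le> (\<Sum>x\<in>X. (cmod (f x))\<^sup>2)"
proof -
  define ip where "ip a = (\<Sum>x\<in>X. f x * cnj (\<phi> a x))" for a
  define co where "co a = ip a / complex_of_real (c a)" for a
  define p where "p x = (\<Sum>a\<in>I. co a * \<phi> a x)" for x
  define K where "K = (\<Sum>a\<in>I. (cmod (ip a))\<^sup>2 / c a)"
  define F where "F = (\<Sum>x\<in>X. (cmod (f x))\<^sup>2)"
  have fp: "(\<Sum>x\<in>X. f x * cnj (p x)) = complex_of_real K"
  proof -
    have "(\<Sum>x\<in>X. f x * cnj (p x)) = (\<Sum>x\<in>X. \<Sum>a\<in>I. cnj (co a) * (f x * cnj (\<phi> a x)))"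
      unfolding p_def cnj_sum by (simp add: sum_distrib_left mult_ac)
    also have "\<dots> = (\<Sum>a\<in>I. cnj (co a) * ip a)"
      unfolding ip_def by (subst sum.swap) (simp add: sum_distrib_left)
    also have "\<dots> = (\<Sum>a\<in>I. complex_of_real ((cmod (ip a))\<^sup>2 / c a))"
    proof (rule sum.cong[OF refl])
      fix a assume "a \<in> I"
      have "cnj (co a) * ip a = (ip a * cnj (ip a)) / complex_of_real (c a)"
        unfolding co_def by simp
      also have "\<dots> = complex_of_real ((cmod (ip a))\<^sup>2 / c a)"
        by (simp add: complex_norm_square[symmetric])
      finally show "cnj (co a) * ip a = complex_of_real ((cmod (ip a))\<^sup>2 / c a)" .
    qed
    also have "\<dots> = complex_of_real K" unfolding K_def by simp
    finally show ?thesis .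
  qed
  have pf: "(\<Sum>x\<in>X. p x * cnj (f x)) = complex_of_real K"
  proof -
    have "(\<Sum>x\<in>X. p x * cnj (f x)) = cnj (\<Sum>x\<in>X. f x * cnj (p x))"
      unfolding cnj_sum by (simp add: mult.commute)
    thus ?thesis unfolding fp by simp
  qed
  have pp: "(\<Sum>x\<in>X. p x * cnj (p x)) = complex_of_real K"
  proof -
    have "(\<Sum>x\<in>X. p x * cnj (p x)) = (\<Sum>x\<in>X. \<Sum>a\<in>I. \<Sum>b\<in>I. co a * cnj (co b) * (\<phi> a x * cnj (\<phi> b x)))"
      unfolding p_def cnj_sum by (simp add: sum_product mult_ac)
    also have "\<dots> = (\<Sum>a\<in>I. \<Sum>b\<in>I. co a * cnj (co b) * (\<Sum>x\<in>X. \<phi> a x * cnj (\<phi> b x)))"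
      by (simp add: sum_distrib_left sum.swap[of _ X])
    also have "\<dots> = (\<Sum>a\<in>I. \<Sum>b\<in>I. if a = b then co a * cnj (co a) * complex_of_real (c a) else 0)"
      by (intro sum.cong refl) (simp add: orth)
    also have "\<dots> = (\<Sum>a\<in>I. co a * cnj (co a) * complex_of_real (c a))"
      using I by (simp add: sum.delta)
    also have "\<dots> = (\<Sum>a\<in>I. cnj (co a) * ip a)"
    proof (rule sum.cong[OF refl])
      fix a assume a: "a \<in> I"
      have "c a \<noteq> 0" using pos[OF a] by simp
      thus "co a * cnj (co a) * complex_of_real (c a) = cnj (co a) * ip a"
        unfolding co_def by (simp add: field_simps)
    qed
    also have "\<dots> = (\<Sum>a\<in>I. complex_of_real ((cmod (ip a))\<^sup>2 / c a))"
    proof (rule sum.cong[OF refl])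
      fix a assume "a \<in> I"
      have "cnj (co a) * ip a = (ip a * cnj (ip a)) / complex_of_real (c a)"
        unfolding co_def by simp
      also have "\<dots> = complex_of_real ((cmod (ip a))\<^sup>2 / c a)"
        by (simp add: complex_norm_square[symmetric])
      finally show "cnj (co a) * ip a = complex_of_real ((cmod (ip a))\<^sup>2 / c a)" .
    qed
    also have "\<dots> = complex_of_real K" unfolding K_def by simp
    finally show ?thesis .
  qed
  have "complex_of_real (\<Sum>x\<in>X. (cmod (f x - p x))\<^sup>2) = (\<Sum>x\<in>X. (f x - p x) * cnj (f x - p x))"
    unfolding of_real_sum complex_norm_square ..
  also have "\<dots> = (\<Sum>x\<in>X. f x * cnj (f x)) - (\<Sum>x\<in>X. f x * cnj (p x))
       - (\<Sum>x\<in>X. p x * cnj (f x)) + (\<Sum>x\<in>X. p x * cnj (p x))"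
    by (simp add: algebra_simps sum_subtractf sum.distrib)
  also have "\<dots> = complex_of_real (F - K)"
    unfolding fp pf pp F_def of_real_diff of_real_sum complex_norm_square by simp
  finally have "(\<Sum>x\<in>X. (cmod (f x - p x))\<^sup>2) = F - K"
    using of_real_eq_iff by blast
  moreover have "0 \<le> (\<Sum>x\<in>X. (cmod (f x - p x))\<^sup>2)" by (simp add: sum_nonneg)
  ultimately have "K \<le> F" by simp
  thus ?thesis unfolding K_def F_def ip_def .
qed


lemma cs_real:
  fixes x y :: "'i \<Rightarrow> real"
  shows "(\<Sum>k\<in>K. x k * y k)\<^sup>2 \<le> (\<Sum>k\<in>K. (x k)\<^sup>2) * (\<Sum>k\<in>K. (y k)\<^sup>2)"
proof -
  define X where "X = (\<Sum>k\<in>K. (x k)\<^sup>2)"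
  define Y where "Y = (\<Sum>k\<in>K. (y k)\<^sup>2)"
  define Z where "Z = (\<Sum>k\<in>K. x k * y k)"
  have e1: "(\<Sum>k\<in>K. \<Sum>l\<in>K. (x k)\<^sup>2 * (y l)\<^sup>2) = X * Y"
    unfolding X_def Y_def by (simp add: sum_product)
  have e2: "(\<Sum>k\<in>K. \<Sum>l\<in>K. (x l)\<^sup>2 * (y k)\<^sup>2) = X * Y"
    unfolding X_def Y_def by (subst sum.swap) (simp add: sum_product)
  have e3: "(\<Sum>k\<in>K. \<Sum>l\<in>K. (x k * y k) * (x l * y l)) = Z\<^sup>2"
    unfolding Z_def by (simp add: sum_product power2_eq_square)
  have "0 \<le> (\<Sum>k\<in>K. \<Sum>l\<in>K. (x k * y l - x l * y k)\<^sup>2)"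
    by (intro sum_nonneg) auto
  also have "\<dots> = (\<Sum>k\<in>K. \<Sum>l\<in>K. ((x k)\<^sup>2 * (y l)\<^sup>2 + (x l)\<^sup>2 * (y k)\<^sup>2) - 2 * ((x k * y k) * (x l * y l)))"
    by (intro sum.cong refl) (simp add: power2_eq_square algebra_simps)
  also have "\<dots> = (\<Sum>k\<in>K. \<Sum>l\<in>K. (x k)\<^sup>2 * (y l)\<^sup>2) + (\<Sum>k\<in>K. \<Sum>l\<in>K. (x l)\<^sup>2 * (y k)\<^sup>2)
      - 2 * (\<Sum>k\<in>K. \<Sum>l\<in>K. (x k * y k) * (x l * y l))"
    by (simp only: sum_subtractf sum.distrib sum_distrib_left)
  also have "\<dots> = 2 * (X * Y - Z\<^sup>2)" unfolding e1 e2 e3 by simp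
  finally have "0 \<le> 2 * (X * Y - Z\<^sup>2)" .
  hence "Z\<^sup>2 \<le> X * Y" by (simp add: zero_le_mult_iff)
  thus ?thesis unfolding X_def Y_def Z_def .
qed

lemma cs_complex:
  fixes a b :: "'i \<Rightarrow> complex"
  shows "(cmod (\<Sum>k\<in>K. a k * b k))\<^sup>2 \<le> (\<Sum>k\<in>K. (cmod (a k))\<^sup>2) * (\<Sum>k\<in>K. (cmod (b k))\<^sup>2)"
proof -
  have "cmod (\<Sum>k\<in>K. a k * b k) \<le> (\<Sum>k\<in>K. cmod (a k) * cmod (b k))"
    unfolding norm_mult[symmetric] by (rule norm_sum)
  hence "(cmod (\<Sum>k\<in>K. a k * b k))\<^sup>2 \<le> (\<Sum>k\<in>K. cmod (a k) * cmod (b k))\<^sup>2"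
    by (simp add: power_mono)
  also have "\<dots> \<le> (\<Sum>k\<in>K. (cmod (a k))\<^sup>2) * (\<Sum>k\<in>K. (cmod (b k))\<^sup>2)" by (rule cs_real)
  finally show ?thesis .
qed

lemma idem_bound:
  fixes A :: "nat \<Rightarrow> nat \<Rightarrow> complex" and m :: real
  assumes m: "m > 0"
    and idem: "\<And>i j. i < d \<Longrightarrow> j < d \<Longrightarrow> (\<Sum>k<d. A i k * A k j) = complex_of_real m * A i j"
  shows "sqrt (\<Sum>i<d. \<Sum>k<d. (cmod (A i k))\<^sup>2) \<le> (\<Sum>i<d. \<Sum>k<d. (cmod (A i k))\<^sup>2) / m"
proof -
  define S where "S = (\<Sum>i<d. \<Sum>k<d. (cmod (A i k))\<^sup>2)"
  define c where "c j = (\<Sum>i<d. (cmod (A i j))\<^sup>2)" for j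
  define r where "r i = (\<Sum>k<d. (cmod (A i k))\<^sup>2)" for i
  have S0: "S \<ge> 0" unfolding S_def by (intro sum_nonneg) auto
  show ?thesis
  proof (cases "S = 0")
    case True thus ?thesis unfolding S_def by simp
  next
    case False
    have Sc: "S = (\<Sum>j<d. c j)" unfolding S_def c_def by (rule sum.swap)
    have "\<exists>j<d. c j \<noteq> 0"
    proof (rule ccontr)
      assume "\<not> (\<exists>j<d. c j \<noteq> 0)"
      hence "S = 0" unfolding Sc by simp
      thus False using False by simp
    qed
    then obtain j where j: "j < d" "c j \<noteq> 0" by auto
    have cpos: "c j > 0" using j unfolding c_def
      by (metis (no_types, lifting) less_eq_real_def sum_nonneg zero_le_power2)
    have bound: "m\<^sup>2 * (cmod (A i j))\<^sup>2 \<le> r i * c j" if i: "i < d" for i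
    proof -
      have "m\<^sup>2 * (cmod (A i j))\<^sup>2 = (cmod (complex_of_real m * A i j))\<^sup>2"
        using m by (simp add: norm_mult power_mult_distrib)
      also have "\<dots> = (cmod (\<Sum>k<d. A i k * A k j))\<^sup>2" using idem[OF i j(1)] by simp
      also have "\<dots> \<le> r i * c j" unfolding r_def c_def by (rule cs_complex)
      finally show ?thesis .
    qed
    have "m\<^sup>2 * c j = (\<Sum>i<d. m\<^sup>2 * (cmod (A i j))\<^sup>2)" unfolding c_def by (simp add: sum_distrib_left)
    also have "\<dots> \<le> (\<Sum>i<d. r i * c j)" by (intro sum_mono bound) auto
    also have "\<dots> = S * c j" unfolding S_def r_def by (simp add: sum_distrib_right)
    finally have "m\<^sup>2 * c j \<le> S * c j" .
    hence mS: "m\<^sup>2 \<le> S" using cpos by simp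
    have "m \<le> sqrt S" using mS m by (simp add: real_le_rsqrt)
    hence "sqrt S * m \<le> sqrt S * sqrt S" by (rule mult_left_mono) (simp add: S0)
    also have "\<dots> = S" using S0 by simp
    finally have "sqrt S * m \<le> S" .
    thus ?thesis unfolding S_def[symmetric] using m by (simp add: field_simps)
  qed
qed


lemma hs_norm_eq:
  assumes A: "A \<in> carrier_mat d d"
  shows "hs_norm A = sqrt (\<Sum>i<d. \<Sum>k<d. (cmod (A $$ (i,k)))\<^sup>2)"
proof -
  have Aa: "mat_adjoint A \<in> carrier_mat d d" using adj_carrier[OF A] .
  have "mtrace (A * mat_adjoint A) = (\<Sum>i<d. (A * mat_adjoint A) $$ (i,i))"
    unfolding mtrace_def using A Aa by simp
  also have "\<dots> = (\<Sum>i<d. \<Sum>k<d. A $$ (i,k) * cnj (A $$ (i,k)))"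
    by (intro sum.cong refl, subst mult_entry[OF A Aa], simp, simp) (use A in \<open>auto simp: adj_entry intro!: sum.cong\<close>)
  also have "\<dots> = complex_of_real (\<Sum>i<d. \<Sum>k<d. (cmod (A $$ (i,k)))\<^sup>2)"
    unfolding of_real_sum complex_norm_square ..
  finally show ?thesis unfolding hs_norm_def by simp
qed

lemma fourier_entry:
  "i < d \<Longrightarrow> j < d \<Longrightarrow> fourier G f d \<rho> $$ (i,j) = (\<Sum>g\<in>carrier G. f g * \<rho> g $$ (i,j))"
  unfolding fourier_def by simp

lemma fourier_ind_entry:
  fixes G (structure)
  assumes fin: "finite (carrier G)" and HG: "H \<subseteq> carrier G" and i: "i < d" and j: "j < d"
  shows "fourier G (\<lambda>g. if g \<in> H then 1 else 0) d \<rho> $$ (i,j) = (\<Sum>h\<in>H. \<rho> h $$ (i,j))"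
proof -
  have "fourier G (\<lambda>g. if g \<in> H then 1 else 0) d \<rho> $$ (i,j) = (\<Sum>g\<in>carrier G. if g \<in> H then \<rho> g $$ (i,j) else 0)"
    unfolding fourier_entry[OF i j] by (intro sum.cong refl) simp
  also have "\<dots> = (\<Sum>g\<in>carrier G \<inter> H. \<rho> g $$ (i,j))" using sum.inter_restrict[OF fin] by metis
  also have "carrier G \<inter> H = H" using HG by blast
  finally show ?thesis .
qed

lemma fourier_idem:
  fixes G (structure)
  assumes G: "group G" and fin: "finite (carrier G)" and H: "subgroup H G" and r: "unitary_rep G d \<rho>"
    and i: "i < d" and j: "j < d"
  shows "(\<Sum>k<d. fourier G (\<lambda>g. if g \<in> H then 1 else 0) d \<rho> $$ (i,k) * fourier G (\<lambda>g. if g \<in> H then 1 else 0) d \<rho> $$ (k,j))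
    = complex_of_real (real (card H)) * fourier G (\<lambda>g. if g \<in> H then 1 else 0) d \<rho> $$ (i,j)"
proof -
  interpret group G by fact
  have HG: "H \<subseteq> carrier G" using H by (rule subgroup.subset)
  have finH: "finite H" using finite_subset[OF HG fin] .
  have hc: "h \<in> carrier G" if "h \<in> H" for h using HG that by auto
  have "(\<Sum>k<d. fourier G (\<lambda>g. if g \<in> H then 1 else 0) d \<rho> $$ (i,k) * fourier G (\<lambda>g. if g \<in> H then 1 else 0) d \<rho> $$ (k,j))
      = (\<Sum>k<d. (\<Sum>h\<in>H. \<rho> h $$ (i,k)) * (\<Sum>h'\<in>H. \<rho> h' $$ (k,j)))"
    by (intro sum.cong refl) (simp add: fourier_ind_entry[OF fin HG] i j)
  also have "\<dots> = (\<Sum>h\<in>H. \<Sum>h'\<in>H. \<Sum>k<d. \<rho> h $$ (i,k) * \<rho> h' $$ (k,j))"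
    by (simp add: sum_product sum.swap[of _ "{..<d}"])
  also have "\<dots> = (\<Sum>h\<in>H. \<Sum>h'\<in>H. \<rho> (h \<otimes> h') $$ (i,j))"
  proof (intro sum.cong refl)
    fix h h' assume h: "h \<in> H" and h': "h' \<in> H"
    show "(\<Sum>k<d. \<rho> h $$ (i,k) * \<rho> h' $$ (k,j)) = \<rho> (h \<otimes> h') $$ (i,j)"
      using rep_hom[OF r hc[OF h] hc[OF h']] mult_entry[OF rep_carrier[OF r hc[OF h]] rep_carrier[OF r hc[OF h']] i j]
      by simp
  qed
  also have "\<dots> = (\<Sum>h\<in>H. \<Sum>h'\<in>H. \<rho> h' $$ (i,j))"
  proof (rule sum.cong[OF refl])
    fix h assume h: "h \<in> H"
    show "(\<Sum>h'\<in>H. \<rho> (h \<otimes> h') $$ (i,j)) = (\<Sum>h'\<in>H. \<rho> h' $$ (i,j))"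
      by (rule sum.reindex_bij_witness[where i="\<lambda>g. inv h \<otimes> g" and j="\<lambda>g. h \<otimes> g"])
         (use h H hc in \<open>auto simp: m_assoc[symmetric] subgroup.m_closed subgroup.m_inv_closed\<close>)
  qed
  also have "\<dots> = of_nat (card H) * (\<Sum>h'\<in>H. \<rho> h' $$ (i,j))" by simp
  also have "\<dots> = complex_of_real (real (card H)) * fourier G (\<lambda>g. if g \<in> H then 1 else 0) d \<rho> $$ (i,j)"
    by (simp add: fourier_ind_entry[OF fin HG i j])
  finally show ?thesis .
qed


theorem lemma6:
  fixes G :: "('g, 'b) monoid_scheme" and H :: "'g set"
    and R :: "(nat \<times> ('g \<Rightarrow> complex mat)) set"
  assumes "group G" and "finite (carrier G)" and "subgroup H G"
    and "complete_irreps G R"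
  shows "wiener_norm G R (\<lambda>g. if g \<in> H then 1 else 0) \<le> 1"
proof (cases "finite R")
  case False
  thus ?thesis unfolding wiener_norm_def by simp
next
  case finR: True
  note G = assms(1) and fin = assms(2) and Hs = assms(3) and R = assms(4)
  interpret group G by fact
  define f :: "'g \<Rightarrow> complex" where "f = (\<lambda>g. if g \<in> H then 1 else 0)"
  define n where "n = card (carrier G)"
  define s where "s = card H"
  define S where "S d \<rho> = (\<Sum>i<d. \<Sum>k<d. (cmod (fourier G f d \<rho> $$ (i,k)))\<^sup>2)" for d \<rho>
  have HG: "H \<subseteq> carrier G" using Hs by (rule subgroup.subset)
  have finH: "finite H" using finite_subset[OF HG fin] .
  have "\<one>\<^bsub>G\<^esub> \<in> H" using Hs by (rule subgroup.one_closed)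
  hence s0: "s > 0" unfolding s_def using finH card_gt_0_iff by blast
  have n0: "n > 0" unfolding n_def using fin one_closed card_gt_0_iff by blast
  have rep: "unitary_rep G d \<rho>" if "(d,\<rho>) \<in> R" for d \<rho>
    using R that unfolding complete_irreps_def by fast
  have step1: "real d * hs_norm (fourier G f d \<rho>) \<le> real d * (S d \<rho> / real s)" if dr: "(d,\<rho>) \<in> R" for d \<rho>
  proof -
    have "hs_norm (fourier G f d \<rho>) = sqrt (S d \<rho>)"
      unfolding S_def by (rule hs_norm_eq) (simp add: fourier_def)
    also have "\<dots> \<le> S d \<rho> / real s"
      unfolding S_def
      by (rule idem_bound[where A="\<lambda>i k. fourier G f d \<rho> $$ (i,k)"])
         (use s0 in simp, unfold f_def s_def, rule fourier_idem[OF G fin Hs rep[OF dr]])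
    finally have "hs_norm (fourier G f d \<rho>) \<le> S d \<rho> / real s" .
    thus ?thesis by (rule mult_left_mono) simp
  qed
  define I where "I = Sigma R (\<lambda>(d,\<rho>). {..<d} \<times> {..<d})"
  define \<phi> where "\<phi> = (\<lambda>((d::nat,\<rho>::'g \<Rightarrow> complex mat),(i::nat,j::nat)) g. cnj (\<rho> g $$ (i,j)))"
  define c where "c = (\<lambda>((d::nat,\<rho>::'g \<Rightarrow> complex mat),(i::nat,j::nat)). real n / real d)"
  have finI: "finite I" unfolding I_def using finR by (intro finite_SigmaI) auto
  have bes: "(\<Sum>a\<in>I. (cmod (\<Sum>x\<in>carrier G. f x * cnj (\<phi> a x)))\<^sup>2 / c a) \<le> (\<Sum>x\<in>carrier G. (cmod (f x))\<^sup>2)"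
  proof (rule bessel[OF fin finI])
    fix a b assume a: "a \<in> I" and b: "b \<in> I"
    obtain d \<rho> i j where a': "a = ((d,\<rho>),(i,j))" and dr: "(d,\<rho>) \<in> R" and i: "i < d" and j: "j < d"
      using a unfolding I_def by auto
    obtain e \<sigma> k l where b': "b = ((e,\<sigma>),(k,l))" and es: "(e,\<sigma>) \<in> R" and k: "k < e" and l: "l < e"
      using b unfolding I_def by auto
    have "(\<Sum>x\<in>carrier G. \<phi> a x * cnj (\<phi> b x)) = cnj (\<Sum>x\<in>carrier G. \<rho> x $$ (i,j) * cnj (\<sigma> x $$ (k,l)))"
      unfolding a' b' \<phi>_def cnj_sum by simp
    also have "\<dots> = cnj (if (d,\<rho>) = (e,\<sigma>) \<and> i = k \<and> j = l then of_nat (card (carrier G)) / of_nat d else 0)"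
      by (subst orth[OF G R dr es i j k l]) simp
    also have "\<dots> = (if a = b then complex_of_real (c a) else 0)"
      unfolding a' b' c_def n_def by auto
    finally show "(\<Sum>x\<in>carrier G. \<phi> a x * cnj (\<phi> b x)) = (if a = b then complex_of_real (c a) else 0)" .
  next
    fix a assume a: "a \<in> I"
    obtain d \<rho> i j where a': "a = ((d,\<rho>),(i,j))" and dr: "(d,\<rho>) \<in> R" and i: "i < d"
      using a unfolding I_def by auto
    show "c a > 0" unfolding a' c_def using n0 i by simp
  qed
  have rhs: "(\<Sum>x\<in>carrier G. (cmod (f x))\<^sup>2) = real s"
  proof -
    have "(\<Sum>x\<in>carrier G. (cmod (f x))\<^sup>2) = (\<Sum>x\<in>carrier G. if x \<in> H then 1 else 0)"
      unfolding f_def by (intro sum.cong refl) auto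
    also have "\<dots> = real (card (carrier G \<inter> H))"
      using sum.inter_restrict[OF fin, of "\<lambda>_. (1::real)" H] by simp
    also have "carrier G \<inter> H = H" using HG by blast
    finally show ?thesis unfolding s_def .
  qed
  define F where "F a = (cmod (\<Sum>x\<in>carrier G. f x * cnj (\<phi> a x)))\<^sup>2 / c a" for a
  have lhs: "(\<Sum>a\<in>I. F a) = (\<Sum>(d,\<rho>)\<in>R. real d * S d \<rho> / real n)"
  proof -
    have "(\<Sum>x\<in>R. \<Sum>y\<in>(\<lambda>(d,\<rho>). {..<d} \<times> {..<d}) x. F (x,y)) = (\<Sum>(x,y)\<in>I. F (x,y))"
      unfolding I_def by (rule sum.Sigma) (use finR in auto)
    hence "(\<Sum>a\<in>I. F a) = (\<Sum>x\<in>R. \<Sum>y\<in>(\<lambda>(d,\<rho>). {..<d} \<times> {..<d}) x. F (x,y))" by simp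
    also have "\<dots> = (\<Sum>(d,\<rho>)\<in>R. real d * S d \<rho> / real n)"
    proof (rule sum.cong[OF refl])
      fix x assume "x \<in> R"
      obtain d \<rho> where x: "x = (d,\<rho>)" by fastforce
      have "(\<Sum>y\<in>{..<d} \<times> {..<d}. F ((d,\<rho>),y)) = (\<Sum>i<d. \<Sum>j<d. F ((d,\<rho>),(i,j)))"
        using sum.cartesian_product[of "\<lambda>i j. F ((d,\<rho>),(i,j))" "{..<d}" "{..<d}"] by (simp add: case_prod_unfold)
      also have "\<dots> = (\<Sum>i<d. \<Sum>j<d. (cmod (fourier G f d \<rho> $$ (i,j)))\<^sup>2 * (real d / real n))"
        by (intro sum.cong refl) (simp add: F_def \<phi>_def c_def fourier_entry)
      also have "\<dots> = (\<Sum>i<d. \<Sum>j<d. (cmod (fourier G f d \<rho> $$ (i,j)))\<^sup>2) * (real d / real n)"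
        by (simp only: sum_distrib_right)
      also have "\<dots> = real d * S d \<rho> / real n"
        unfolding S_def by simp
      finally show "(\<Sum>y\<in>(\<lambda>(d,\<rho>). {..<d} \<times> {..<d}) x. F (x,y)) = (case x of (d,\<rho>) \<Rightarrow> real d * S d \<rho> / real n)"
        unfolding x by simp
    qed
    finally show ?thesis .
  qed
  have B: "(\<Sum>(d,\<rho>)\<in>R. real d * S d \<rho> / real n) \<le> real s" using bes unfolding F_def[symmetric] lhs rhs .
  have "wiener_norm G R f = (1 / real n) * (\<Sum>(d,\<rho>)\<in>R. real d * hs_norm (fourier G f d \<rho>))"
    unfolding wiener_norm_def n_def ..
  also have "\<dots> \<le> (1 / real n) * (\<Sum>(d,\<rho>)\<in>R. real d * (S d \<rho> / real s))"
    by (intro mult_left_mono sum_mono) (auto simp: step1[unfolded times_divide_eq_right])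
  also have "\<dots> = (1 / real s) * (\<Sum>(d,\<rho>)\<in>R. real d * S d \<rho> / real n)"
    by (simp add: sum_distrib_left case_prod_unfold field_simps)
  also have "\<dots> \<le> (1 / real s) * real s"
    by (rule mult_left_mono[OF B]) simp
  also have "\<dots> = 1" using s0 by simp
  finally show ?thesis unfolding f_def .
qed


end
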